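(* Let $\prec$ be the lexicographic term order on $K[\mathbf T_{\lambda-\mu}]$ induced by the variable order $T_{rc}>T_{r'c'}$ if and only if $r<r'$, or $r=r'$ and $c<c'$. Then: (a) the 2-minors of $\mathbf T_{\lambda-\mu}$ form a Gröbner basis of $I_2(\mathbf T_{\lambda-\mu})$ with respect to $\prec$; (b) the 2-minors of $\mathbf S_{\lambda-\mu}$ form a Gröbner basis of $I_2(\mathbf S_{\lambda-\mu})$ with respect to $\prec$.
   Context: Let $K$ be a field. Fix an integer $n\ge1$, a partition $\lambda=(\lambda_1,\dots,\lambda_n)$ of positive integers with $m:=\lambda_1\ge\lambda_2\ge\cdots\ge\lambda_n$, and an integer vector $\mu=(\mu_1,\dots,\mu_n)$ with $0\le\mu_1\le\cdots\le\mu_n<\lambda_n$ and $\mu_i\ge i-1$ for all $i$. The tableau $\mathbf T_{\lambda-\mu}$ is the set of positions $\{(i,j):1\le i\le n,\ \mu_i<j\le\lambda_i\}$ in an $m\times m$ array, and $K[\mathbf T_{\lambda-\mu}]$ is the polynomial ring over $K$ in the variables $T_{ij}$, $(i,j)\in\mathbf T_{\lambda-\mu}$; the entry of $\mathbf T_{\lambda-\mu}$ at $(i,j)$ is $T_{ij}$. The symmetrized tableau $\mathbf S_{\lambda-\mu}$ is the partially filled $m\times m$ array with set of positions $\{(i,j):(i,j)\in\mathbf T_{\lambda-\mu}\text{ or }(j,i)\in\mathbf T_{\lambda-\mu}\}$, whose entry at $(i,j)$ is $T_{ij}$ if $(i,j)\in\mathbf T_{\lambda-\mu}$ and $T_{ji}$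 otherwise (this is well defined; $\mathbf S_{\lambda-\mu}$ may have holes). For such an array $A$ with set of positions $P$ and entries $a_{ij}$, a 2-minor of $A$ is a polynomial $a_{ij}a_{kl}-a_{il}a_{kj}$ with $i<k$, $j<l$ and $(i,j),(i,l),(k,j),(k,l)\in P$. $I_2(\mathbf T_{\lambda-\mu})$ and $I_2(\mathbf S_{\lambda-\mu})$ denote the ideals of $K[\mathbf T_{\lambda-\mu}]$ generated by the 2-minors of $\mathbf T_{\lambda-\mu}$ and of $\mathbf S_{\lambda-\mu}$, respectively. *)

theory Defs
  imports "HOL-Library.Poly_Mapping"
begin

type_synonym mon = "(nat \<times> nat) \<Rightarrow>\<^sub>0 nat"
type_synonym 'a mpoly = "mon \<Rightarrow>\<^sub>0 'a"

definition Var :: "nat \<times> nat \<Rightarrow> 'a::comm_ring_1 mpoly" where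
  "Var v = Poly_Mapping.single (Poly_Mapping.single v 1) 1"

definition poly_ring :: "(nat \<times> nat) set \<Rightarrow> 'a::comm_ring_1 mpoly set" where
  "poly_ring P = {f. \<forall>m \<in> Poly_Mapping.keys f. \<forall>v. Poly_Mapping.lookup m v \<noteq> 0 \<longrightarrow> v \<in> P}"

definition ideal_in :: "'a::comm_ring_1 mpoly set \<Rightarrow> 'a mpoly set \<Rightarrow> 'a mpoly set" where
  "ideal_in R G = {(\<Sum>g\<in>F. q g * g) | F q. finite F \<and> F \<subseteq> G \<and> (\<forall>g\<in>F. q g \<in> R)}"

definition var_gt :: "nat \<times> nat \<Rightarrow> nat \<times> nat \<Rightarrow> bool" where
  "var_gt v w \<longleftrightarrow> fst v < fst w \<or> (fst v = fst w \<and> snd v < snd w)"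

definition lex_less :: "mon \<Rightarrow> mon \<Rightarrow> bool" where
  "lex_less m m' \<longleftrightarrow> (\<exists>v. Poly_Mapping.lookup m v < Poly_Mapping.lookup m' v \<and>
       (\<forall>w. var_gt w v \<longrightarrow> Poly_Mapping.lookup m w = Poly_Mapping.lookup m' w))"

definition lead_mon :: "'a::zero mpoly \<Rightarrow> mon" where
  "lead_mon f = (THE m. m \<in> Poly_Mapping.keys f \<and> (\<forall>m' \<in> Poly_Mapping.keys f. m' \<noteq> m \<longrightarrow> lex_less m' m))"

definition mon_dvd :: "mon \<Rightarrow> mon \<Rightarrow> bool" where
  "mon_dvd m m' \<longleftrightarrow> (\<forall>v. Poly_Mapping.lookup m v \<le> Poly_Mapping.lookup m' v)"

definition is_groebner_basis :: "'a::zero mpoly set \<Rightarrow> 'a mpoly set \<Rightarrow> bool" where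
  "is_groebner_basis G I \<longleftrightarrow> G \<subseteq> I \<and>
     (\<forall>f \<in> I. f \<noteq> 0 \<longrightarrow> (\<exists>g \<in> G. g \<noteq> 0 \<and> mon_dvd (lead_mon g) (lead_mon f)))"

definition minors2 :: "(nat \<times> nat) set \<Rightarrow> (nat \<times> nat \<Rightarrow> 'a::comm_ring_1 mpoly) \<Rightarrow> 'a mpoly set" where
  "minors2 P a = {a (i,j) * a (k,l) - a (i,l) * a (k,j) | i j k l.
      i < k \<and> j < l \<and> (i,j) \<in> P \<and> (i,l) \<in> P \<and> (k,j) \<in> P \<and> (k,l) \<in> P}"

text \<open>Tableau T_{\<lambda>-\<mu>} (rows 1..n) and its symmetrization S_{\<lambda>-\<mu>}.\<close>
definition tab_pos :: "nat \<Rightarrow> (nat \<Rightarrow> nat) \<Rightarrow> (nat \<Rightarrow> nat) \<Rightarrow> (nat \<times> nat) set" where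
  "tab_pos n lam mu = {(i,j). 1 \<le> i \<and> i \<le> n \<and> mu i < j \<and> j \<le> lam i}"

definition tab_entry :: "(nat \<times> nat) \<Rightarrow> 'a::comm_ring_1 mpoly" where
  "tab_entry p = Var p"

definition sym_pos :: "nat \<Rightarrow> (nat \<Rightarrow> nat) \<Rightarrow> (nat \<Rightarrow> nat) \<Rightarrow> (nat \<times> nat) set" where
  "sym_pos n lam mu = {(i,j). (i,j) \<in> tab_pos n lam mu \<or> (j,i) \<in> tab_pos n lam mu}"

definition sym_entry :: "nat \<Rightarrow> (nat \<Rightarrow> nat) \<Rightarrow> (nat \<Rightarrow> nat) \<Rightarrow> (nat \<times> nat) \<Rightarrow> 'a::comm_ring_1 mpoly" where
  "sym_entry n lam mu p = (if p \<in> tab_pos n lam mu then Var p else Var (snd p, fst p))"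

end

theory Submission
  imports Defs "HOL-Library.Product_Lexorder"
begin


abbreviation lk where "lk \<equiv> Poly_Mapping.lookup"
abbreviation ks where "ks \<equiv> Poly_Mapping.keys"
abbreviation sng where "sng \<equiv> Poly_Mapping.single"

lemma var_gt_iff: "var_gt v w \<longleftrightarrow> v < w"
  by (cases v; cases w) (auto simp: var_gt_def)

lemma lex_less_irrefl: "\<not> lex_less m m"
  by (auto simp: lex_less_def)

lemma lex_less_trans:
  assumes "lex_less a b" "lex_less b c" shows "lex_less a c"
proof -
  obtain v where v: "lk a v < lk b v" "\<forall>w. var_gt w v \<longrightarrow> lk a w = lk b w"
    using assms(1) by (auto simp: lex_less_def)
  obtain u where u: "lk b u < lk c u" "\<forall>w. var_gt w u \<longrightarrow> lk b w = lk c w"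
    using assms(2) by (auto simp: lex_less_def)
  consider "v = u" | "v < u" | "u < v" by fastforce
  then show ?thesis
  proof cases
    case 1 then show ?thesis using u v unfolding lex_less_def by (intro exI[of _ v]) auto
  next
    case 2
    have "lk b v = lk c v" using u(2) 2 var_gt_iff by blast
    then have "lk a v < lk c v" using v by simp
    moreover have "\<forall>w. var_gt w v \<longrightarrow> lk a w = lk c w"
      using u v 2 by (auto simp: var_gt_iff)
    ultimately show ?thesis unfolding lex_less_def by blast
  next
    case 3
    have "lk a u = lk b u" using v(2) 3 var_gt_iff by blast
    then have "lk a u < lk c u" using u by simp
    moreover have "\<forall>w. var_gt w u \<longrightarrow> lk a w = lk c w"
      using u v 3 by (auto simp: var_gt_iff)
    ultimately show ?thesis unfolding lex_less_def by blast
  qed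
qed

lemma lex_less_total:
  assumes "m \<noteq> m'" shows "lex_less m m' \<or> lex_less m' m"
proof -
  let ?D = "{v. lk m v \<noteq> lk m' v}"
  have "?D \<subseteq> ks m \<union> ks m'" by (auto simp: in_keys_iff)
  then have fin: "finite ?D" by (rule finite_subset) auto
  have ne: "?D \<noteq> {}" using assms by (metis (mono_tags, lifting) empty_Collect_eq poly_mapping_eqI)
  define v where "v = Min ?D"
  have vD: "v \<in> ?D" unfolding v_def by (rule Min_in[OF fin ne])
  have vmin: "\<forall>w. var_gt w v \<longrightarrow> lk m w = lk m' w"
    using fin Min_le by (fastforce simp: var_gt_iff v_def)
  show ?thesis
  proof (cases "lk m v < lk m' v")
    case True then show ?thesis using vmin unfolding lex_less_def by blast
  next
    case False
    then have "lk m' v < lk m v" using vD by simp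
    then show ?thesis using vmin unfolding lex_less_def by metis
  qed
qed

lemma lex_less_add: "lex_less a b \<Longrightarrow> lex_less (u + a) (u + b)"
  by (auto simp: lex_less_def lookup_add)

lemma lead_monI:
  assumes "c \<in> ks f" "\<forall>m\<in>ks f. m \<noteq> c \<longrightarrow> lex_less m c"
  shows "lead_mon f = c"
  unfolding lead_mon_def
proof (rule the_equality)
  show "c \<in> ks f \<and> (\<forall>m'\<in>ks f. m' \<noteq> c \<longrightarrow> lex_less m' c)" using assms by blast
next
  fix m assume m: "m \<in> ks f \<and> (\<forall>m'\<in>ks f. m' \<noteq> m \<longrightarrow> lex_less m' m)"
  show "m = c"
  proof (rule ccontr)
    assume "m \<noteq> c"
    then have "lex_less m c" "lex_less c m" using m assms by auto
    then show False using lex_less_trans lex_less_irrefl by blast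
  qed
qed

lemma max_exists:
  assumes "finite S" "S \<noteq> {}"
  shows "\<exists>c\<in>S. \<forall>m\<in>S. m \<noteq> c \<longrightarrow> lex_less m c"
  using assms
proof (induction S rule: finite_ne_induct)
  case (singleton x) then show ?case by auto
next
  case (insert x F)
  then obtain c where c: "c \<in> F" "\<forall>m\<in>F. m \<noteq> c \<longrightarrow> lex_less m c" by blast
  show ?case
  proof (cases "lex_less c x")
    case True
    then show ?thesis using c lex_less_trans by (intro bexI[of _ x]) auto
  next
    case False
    then have "x = c \<or> lex_less x c" using lex_less_total by blast
    then show ?thesis using c by (intro bexI[of _ c]) auto
  qed
qed

lemma lead_mon_props:
  assumes "f \<noteq> 0"
  shows "lead_mon f \<in> ks f" "\<And>m. m \<in> ks f \<Longrightarrow> m \<noteq> lead_mon f \<Longrightarrow> lex_less m (lead_mon f)"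
proof -
  obtain c where c: "c \<in> ks f" "\<forall>m\<in>ks f. m \<noteq> c \<longrightarrow> lex_less m c"
    using max_exists[of "ks f"] assms by auto
  then have "lead_mon f = c" by (rule lead_monI)
  then show "lead_mon f \<in> ks f" "\<And>m. m \<in> ks f \<Longrightarrow> m \<noteq> lead_mon f \<Longrightarrow> lex_less m (lead_mon f)"
    using c by auto
qed

lemma lead_mon_binom:
  assumes "lex_less b a"
  shows "lead_mon (sng a (1::'a::comm_ring_1) - sng b 1) = a"
    and "lead_mon (sng b (1::'a::comm_ring_1) - sng a 1) = a"
    and "sng a (1::'a::comm_ring_1) - sng b 1 \<noteq> 0"
    and "sng b (1::'a::comm_ring_1) - sng a 1 \<noteq> 0"
proof -
  have ab: "a \<noteq> b" using assms lex_less_irrefl by blast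
  have k1: "ks (sng a (1::'a) - sng b 1) = {a, b}"
    using ab by (auto simp: in_keys_iff lookup_minus lookup_single when_def split: if_splits)
  have k2: "ks (sng b (1::'a) - sng a 1) = {a, b}"
    using ab by (auto simp: in_keys_iff lookup_minus lookup_single when_def split: if_splits)
  show "lead_mon (sng a (1::'a::comm_ring_1) - sng b 1) = a"
    by (rule lead_monI) (use k1 assms in auto)
  show "lead_mon (sng b (1::'a::comm_ring_1) - sng a 1) = a"
    by (rule lead_monI) (use k2 assms in auto)
  show "sng a (1::'a::comm_ring_1) - sng b 1 \<noteq> 0"
    using k1 by (metis insert_not_empty keys_eq_empty)
  show "sng b (1::'a::comm_ring_1) - sng a 1 \<noteq> 0"
    using k2 by (metis insert_not_empty keys_eq_empty)
qed



lemma lex_wf: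
  assumes "finite P"
  shows "wf {(s,m). ks s \<subseteq> P \<and> ks m \<subseteq> P \<and> lex_less s m}"
proof -
  define xs where "xs = sorted_list_of_set P"
  have sxs: "sorted_wrt (<) xs" unfolding xs_def by (rule strict_sorted_list_of_set)
  have setxs: "set xs = P" unfolding xs_def using assms by simp
  define key where "key m = map (lk m) xs" for m :: mon
  have "{(s,m). ks s \<subseteq> P \<and> ks m \<subseteq> P \<and> lex_less s m} \<subseteq> inv_image (lex less_than) key"
  proof clarsimp
    fix s m assume sP: "ks s \<subseteq> P" and mP: "ks m \<subseteq> P" and "lex_less s m"
    then obtain v where v: "lk s v < lk m v" "\<forall>w. var_gt w v \<longrightarrow> lk s w = lk m w"
      by (auto simp: lex_less_def)
    then have "v \<in> ks m" by (simp add: in_keys_iff)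
    then have "v \<in> set xs" using mP setxs by auto
    then obtain as bs where xsv: "xs = as @ v # bs" by (meson split_list)
    then have "\<forall>w\<in>set as. w < v" using sxs by (simp add: sorted_wrt_append)
    then have "map (lk s) as = map (lk m) as" using v(2) by (auto simp: var_gt_iff)
    then show "(key s, key m) \<in> lex less_than"
      unfolding key_def lex_conv using v(1) xsv
      by (intro CollectI case_prodI conjI exI[of _ "map (lk s) as"] exI[of _ "lk s v"] exI[of _ "lk m v"]
          exI[of _ "map (lk s) bs"] exI[of _ "map (lk m) bs"]) auto
  qed
  moreover have "wf (inv_image (lex less_than) key)" by auto
  ultimately show ?thesis using wf_subset by blast
qed

definition Phi :: "(mon \<Rightarrow> 'b) \<Rightarrow> 'a::comm_ring_1 mpoly \<Rightarrow> 'b \<Rightarrow> 'a" where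
  "Phi \<phi> f t = (\<Sum>m\<in>ks f. if \<phi> m = t then lk f m else 0)"

lemma Phi_superset:
  assumes "finite S" "ks f \<subseteq> S"
  shows "Phi \<phi> f t = (\<Sum>m\<in>S. if \<phi> m = t then lk f m else 0)"
  unfolding Phi_def
  by (rule sum.mono_neutral_left) (use assms in \<open>auto simp: in_keys_iff\<close>)

lemma Phi_add: "Phi \<phi> (f + g) t = Phi \<phi> f t + Phi \<phi> g t"
proof -
  let ?S = "ks f \<union> ks g"
  have "Phi \<phi> (f + g) t = (\<Sum>m\<in>?S. if \<phi> m = t then lk (f + g) m else 0)"
    by (rule Phi_superset) (auto dest: subsetD[OF keys_add])
  also have "\<dots> = (\<Sum>m\<in>?S. if \<phi> m = t then lk f m else 0) + (\<Sum>m\<in>?S. if \<phi> m = t then lk g m else 0)"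
    by (simp add: lookup_add sum.distrib[symmetric] if_distrib) (rule sum.cong, auto simp: lookup_add)
  also have "\<dots> = Phi \<phi> f t + Phi \<phi> g t"
    by (simp add: Phi_superset[symmetric])
  finally show ?thesis .
qed

lemma Phi_neg: "Phi \<phi> (- f) t = - Phi \<phi> (f::'a::comm_ring_1 mpoly) t"
  by (simp add: Phi_def sum_negf[symmetric] if_distrib) (rule sum.cong, auto)

lemma Phi_diff: "Phi \<phi> (f - g) t = Phi \<phi> f t - Phi \<phi> (g::'a::comm_ring_1 mpoly) t"
  using Phi_add[of \<phi> f "- g" t] Phi_neg[of \<phi> g t] by simp

lemma Phi_zero: "Phi \<phi> 0 t = 0"
  by (simp add: Phi_def)

lemma Phi_sum: "Phi \<phi> (\<Sum>x\<in>A. F x) t = (\<Sum>x\<in>A. Phi \<phi> (F x) t)"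
  by (induction A rule: infinite_finite_induct) (auto simp: Phi_zero Phi_add)

lemma Phi_single: "Phi \<phi> (sng x c) t = (if \<phi> x = t then c else 0)"
  by (simp add: Phi_def)

lemma poly_expand: "f = (\<Sum>u\<in>ks f. sng u (lk f u))"
proof (rule poly_mapping_eqI)
  fix k
  show "lk f k = lk (\<Sum>u\<in>ks f. sng u (lk f u)) k"
    by (simp add: lookup_sum lookup_single when_def in_keys_iff)
qed

lemma Phi_mult_binom:
  assumes cong: "\<And>u. \<phi> (u + a) = \<phi> (u + b)"
  shows "Phi \<phi> (q * (sng a 1 - sng b (1::'a::comm_ring_1))) t = 0"
proof -
  have "q * (sng a 1 - sng b 1) = (\<Sum>u\<in>ks q. sng u (lk q u) * (sng a 1 - sng b 1))"
    by (subst poly_expand[of q]) (simp add: sum_distrib_right)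
  also have "\<dots> = (\<Sum>u\<in>ks q. sng (u + a) (lk q u) - sng (u + b) (lk q u))"
    by (simp add: right_diff_distrib mult_single)
  finally show ?thesis
    by (simp add: Phi_sum Phi_diff Phi_single cong)
qed

definition std :: "'a::zero mpoly set \<Rightarrow> mon \<Rightarrow> bool" where
  "std G s \<longleftrightarrow> (\<forall>g\<in>G. g \<noteq> 0 \<longrightarrow> \<not> mon_dvd (lead_mon g) s)"

lemma poly_ring_iff: "f \<in> poly_ring P \<longleftrightarrow> (\<forall>m\<in>ks f. ks m \<subseteq> P)"
  by (simp add: poly_ring_def subset_iff in_keys_iff)

lemma poly_ring_mult: "p \<in> poly_ring P \<Longrightarrow> q \<in> poly_ring P \<Longrightarrow> p * q \<in> poly_ring P"
  unfolding poly_ring_iff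
  by (fastforce dest!: subsetD[OF keys_mult] dest: subsetD[OF keys_add])

lemma poly_ring_sum: "(\<And>x. x \<in> A \<Longrightarrow> F x \<in> poly_ring P) \<Longrightarrow> (\<Sum>x\<in>A. F x) \<in> poly_ring P"
  unfolding poly_ring_iff by (fastforce dest!: subsetD[OF keys_sum])



lemma mon_dvd_split:
  assumes "mon_dvd a m" shows "m = (m - a) + a"
proof (rule poly_mapping_eqI)
  fix k
  have "lk a k \<le> lk m k" using assms unfolding mon_dvd_def by blast
  then show "lk m k = lk (m - a + a) k" by (simp add: lookup_add lookup_minus)
qed

lemma keys_mon_minus: "ks (m - a) \<subseteq> ks (m::mon)"
  by (auto simp: in_keys_iff lookup_minus)

lemma generic_gb:
  fixes G :: "'a::field mpoly set" and \<phi> :: "mon \<Rightarrow> 'b"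
  assumes finP: "finite P"
    and gens: "\<forall>g\<in>G. \<exists>a b. (g = sng a 1 - sng b 1 \<or> g = sng b 1 - sng a 1) \<and> lex_less b a
                 \<and> \<phi> a = \<phi> b \<and> ks a \<subseteq> P \<and> ks b \<subseteq> P"
    and cong: "\<And>u a b. \<phi> a = \<phi> b \<Longrightarrow> \<phi> (u + a) = \<phi> (u + b)"
    and inj: "\<And>s t. ks s \<subseteq> P \<Longrightarrow> ks t \<subseteq> P \<Longrightarrow> std G s \<Longrightarrow> std G t \<Longrightarrow> \<phi> s = \<phi> t \<Longrightarrow> s = t"
  shows "is_groebner_basis G (ideal_in (poly_ring P) G)"
proof -
  have gP: "g \<in> poly_ring P" if gG: "g \<in> G" for g
  proof -
    obtain a b where ab: "g = sng a 1 - sng b 1 \<or> g = sng b 1 - sng a 1" "ks a \<subseteq> P" "ks b \<subseteq> P"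
      using gens gG by blast
    have "ks g \<subseteq> {a, b}" using ab(1) keys_diff by fastforce
    then show ?thesis using ab by (auto simp: poly_ring_iff)
  qed
  have one: "1 \<in> poly_ring P" by (simp add: poly_ring_iff)
  have sub: "G \<subseteq> ideal_in (poly_ring P) G"
  proof
    fix g assume "g \<in> G"
    then show "g \<in> ideal_in (poly_ring P) G"
      unfolding ideal_in_def using one
      by (intro CollectI exI[of _ "{g}"] exI[of _ "\<lambda>_. 1"]) auto
  qed
  let ?R = "{(s,m). ks s \<subseteq> P \<and> ks m \<subseteq> P \<and> lex_less s m}"
  have red: "ks m \<subseteq> P \<longrightarrow> (\<exists>s. ks s \<subseteq> P \<and> std G s \<and> \<phi> s = \<phi> m \<and> (s = m \<or> lex_less s m))" for m
  proof (induction m rule: wf_induct[OF lex_wf[OF finP]])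
    case (1 m)
    show ?case
    proof
      assume mP: "ks m \<subseteq> P"
      show "\<exists>s. ks s \<subseteq> P \<and> std G s \<and> \<phi> s = \<phi> m \<and> (s = m \<or> lex_less s m)"
      proof (cases "std G m")
        case True then show ?thesis using mP by blast
      next
        case False
        then obtain g where g: "g \<in> G" "g \<noteq> 0" "mon_dvd (lead_mon g) m" by (auto simp: std_def)
        obtain a b where ab: "g = sng a 1 - sng b 1 \<or> g = sng b 1 - sng a 1" "lex_less b a"
          "\<phi> a = \<phi> b" "ks a \<subseteq> P" "ks b \<subseteq> P"
          using gens g(1) by blast
        have "lead_mon g = a" using ab(1,2) lead_mon_binom by metis
        then have dv: "mon_dvd a m" using g by simp
        define m' where "m' = (m - a) + b"
        have mm: "m = (m - a) + a" by (rule mon_dvd_split[OF dv])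
        have m'P: "ks m' \<subseteq> P"
          unfolding m'_def using keys_add[of "m - a" b] keys_mon_minus[of m a] mP ab(5) by blast
        have lt: "lex_less m' m" unfolding m'_def by (subst mm, rule lex_less_add, rule ab(2))
        have ph: "\<phi> m' = \<phi> m" unfolding m'_def by (subst (2) mm) (rule cong, simp add: ab(3))
        have "(m', m) \<in> ?R" using m'P mP lt by simp
        then obtain s where s: "ks s \<subseteq> P" "std G s" "\<phi> s = \<phi> m'" "s = m' \<or> lex_less s m'"
          using 1 m'P by blast
        then show ?thesis using lt ph lex_less_trans by metis
      qed
    qed
  qed
  have van: "Phi \<phi> f t = 0 \<and> f \<in> poly_ring P" if fI0: "f \<in> ideal_in (poly_ring P) G" for f t
  proof -
    obtain F q where f: "f = (\<Sum>g\<in>F. q g * g)" "finite F" "F \<subseteq> G" "\<forall>g\<in>F. q g \<in> poly_ring P"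
      using fI0 unfolding ideal_in_def by blast
    have "Phi \<phi> (q g * g) t = 0" if gF: "g \<in> F" for g
    proof -
      obtain a b where ab: "g = sng a 1 - sng b 1 \<or> g = sng b 1 - sng a 1" "\<phi> a = \<phi> b"
        using gens f(3) gF by blast
      have c1: "\<And>u. \<phi> (u + a) = \<phi> (u + b)" using cong ab(2) by blast
      have c2: "\<And>u. \<phi> (u + b) = \<phi> (u + a)" using cong ab(2) by metis
      from ab(1) show ?thesis
        using Phi_mult_binom[of \<phi> a b "q g" t, OF c1] Phi_mult_binom[of \<phi> b a "q g" t, OF c2] by auto
    qed
    then have "Phi \<phi> f t = 0" unfolding f(1) Phi_sum by simp
    moreover have "f \<in> poly_ring P"
      unfolding f(1) using f(3,4) gP by (intro poly_ring_sum poly_ring_mult) auto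
    ultimately show ?thesis by blast
  qed
  show ?thesis
    unfolding is_groebner_basis_def
  proof (intro conjI sub ballI impI)
    fix f assume fI: "f \<in> ideal_in (poly_ring P) G" and f0: "f \<noteq> 0"
    define L where "L = lead_mon f"
    have LK: "L \<in> ks f" using lead_mon_props(1)[OF f0] by (simp add: L_def)
    have fP: "f \<in> poly_ring P" using van fI by blast
    have LP: "ks L \<subseteq> P" using fP LK by (auto simp: poly_ring_iff)
    show "\<exists>g\<in>G. g \<noteq> 0 \<and> mon_dvd (lead_mon g) (lead_mon f)"
    proof (rule ccontr)
      assume "\<not> ?thesis"
      then have stdL: "std G L" by (auto simp: std_def L_def)
      have eq: "\<phi> m = \<phi> L \<longleftrightarrow> m = L" if "m \<in> ks f" for m
      proof
        assume pm: "\<phi> m = \<phi> L"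
        show "m = L"
        proof (rule ccontr)
          assume "m \<noteq> L"
          then have lt: "lex_less m L" using lead_mon_props(2)[OF f0 that] by (simp add: L_def)
          have mP: "ks m \<subseteq> P" using fP that by (auto simp: poly_ring_iff)
          obtain s where s: "ks s \<subseteq> P" "std G s" "\<phi> s = \<phi> m" "s = m \<or> lex_less s m"
            using red[of m] mP by blast
          have "s = L" using inj[OF s(1) LP s(2) stdL] s(3) pm by simp
          then show False using s(4) lt lex_less_trans lex_less_irrefl by metis
        qed
      qed simp
      have "Phi \<phi> f (\<phi> L) = (\<Sum>m\<in>ks f. if m = L then lk f m else 0)"
        unfolding Phi_def by (rule sum.cong) (auto simp: eq)
      also have "\<dots> = lk f L" using LK by simp
      finally have "lk f L = 0" using van[OF fI] by simp
      then show False using LK by (simp add: in_keys_iff)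
    qed
  qed
qed



abbreviation xv :: "nat \<times> nat \<Rightarrow> mon" where "xv v \<equiv> sng v 1"

definition rc :: "(nat \<times> nat) set \<Rightarrow> mon \<Rightarrow> nat \<Rightarrow> nat" where
  "rc P m i = (\<Sum>v\<in>P. if fst v = i then lk m v else 0)"
definition cc :: "(nat \<times> nat) set \<Rightarrow> mon \<Rightarrow> nat \<Rightarrow> nat" where
  "cc P m i = (\<Sum>v\<in>P. if snd v = i then lk m v else 0)"
definition deg :: "(nat \<times> nat) set \<Rightarrow> mon \<Rightarrow> nat" where
  "deg P m = (\<Sum>v\<in>P. lk m v)"

lemma rc_add: "rc P (u + a) i = rc P u i + rc P a i"
  by (simp add: rc_def lookup_add sum.distrib[symmetric] if_distrib) (rule sum.cong, auto simp: lookup_add)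
lemma cc_add: "cc P (u + a) i = cc P u i + cc P a i"
  by (simp add: cc_def lookup_add sum.distrib[symmetric] if_distrib) (rule sum.cong, auto simp: lookup_add)
lemma deg_add: "deg P (u + a) = deg P u + deg P a"
  by (simp add: deg_def lookup_add sum.distrib)

lemma rc_xv: "finite P \<Longrightarrow> v \<in> P \<Longrightarrow> rc P (xv v) i = (if fst v = i then 1 else 0)"
proof -
  assume "finite P" "v \<in> P"
  have "(\<lambda>w. if fst w = i then lk (xv v) w else 0) = (\<lambda>w. if w = v then (if fst v = i then 1 else 0) else 0)"
    by (auto simp: lookup_single when_def fun_eq_iff)
  then show ?thesis unfolding rc_def using \<open>finite P\<close> \<open>v \<in> P\<close> by (simp only:) simp
qed
lemma cc_xv: "finite P \<Longrightarrow> v \<in> P \<Longrightarrow> cc P (xv v) i = (if snd v = i then 1 else 0)"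
proof -
  assume "finite P" "v \<in> P"
  have "(\<lambda>w. if snd w = i then lk (xv v) w else 0) = (\<lambda>w. if w = v then (if snd v = i then 1 else 0) else 0)"
    by (auto simp: lookup_single when_def fun_eq_iff)
  then show ?thesis unfolding cc_def using \<open>finite P\<close> \<open>v \<in> P\<close> by (simp only:) simp
qed
lemma deg_xv: "finite P \<Longrightarrow> v \<in> P \<Longrightarrow> deg P (xv v) = 1"
proof -
  assume "finite P" "v \<in> P"
  have "(\<lambda>w. lk (xv v) w) = (\<lambda>w. if w = v then 1 else 0)"
    by (auto simp: lookup_single when_def fun_eq_iff)
  then show ?thesis unfolding deg_def using \<open>finite P\<close> \<open>v \<in> P\<close> by simp
qed

lemma Var_mult: "Var v * Var w = sng (xv v + xv w) (1::'a::comm_ring_1)"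
  by (simp add: Var_def mult_single)



lemma lexT: "i < k \<Longrightarrow> j < l \<Longrightarrow> lex_less (xv (i,l) + xv (k,j)) (xv (i,j) + xv (k,l))"
  unfolding lex_less_def
  by (rule exI[of _ "(i,j)"]) (auto simp: lookup_add lookup_single when_def var_gt_def)

lemma xv_dvd: "lk s v > 0 \<Longrightarrow> mon_dvd (xv v) s"
  by (auto simp: mon_dvd_def lookup_single when_def)

lemma xv2_dvd: "v \<noteq> w \<Longrightarrow> lk s v > 0 \<Longrightarrow> lk s w > 0 \<Longrightarrow> mon_dvd (xv v + xv w) s"
  by (auto simp: mon_dvd_def lookup_single lookup_add when_def)

lemma mon_dvd_lk: "mon_dvd a s \<Longrightarrow> lk a v \<le> lk s v"
  unfolding mon_dvd_def by blast

lemma sum_pos_nat: "finite A \<Longrightarrow> (0 < sum f A) \<longleftrightarrow> (\<exists>a\<in>A. 0 < (f a :: nat))"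
  by (metis gr0I sum_eq_0_iff not_gr0)

locale lad =
  fixes n :: nat and lam mu :: "nat \<Rightarrow> nat"
  assumes n1: "n \<ge> 1"
    and lampos: "\<forall>i. 1 \<le> i \<and> i \<le> n \<longrightarrow> lam i > 0"
    and lammono: "\<forall>i j. 1 \<le> i \<and> i \<le> j \<and> j \<le> n \<longrightarrow> lam j \<le> lam i"
    and mumono: "\<forall>i j. 1 \<le> i \<and> i \<le> j \<and> j \<le> n \<longrightarrow> mu i \<le> mu j"
    and mun: "mu n < lam n"
    and mui: "\<forall>i. 1 \<le> i \<and> i \<le> n \<longrightarrow> i - 1 \<le> mu i"
begin

abbreviation P where "P \<equiv> tab_pos n lam mu"

lemma inP: "(i,j) \<in> P \<longleftrightarrow> 1 \<le> i \<and> i \<le> n \<and> mu i < j \<and> j \<le> lam i"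
  by (simp add: tab_pos_def)

lemma lam_le1: "1 \<le> i \<Longrightarrow> i \<le> n \<Longrightarrow> lam i \<le> lam 1"
  using lammono by auto

lemma finP: "finite P"
proof (rule finite_subset)
  show "P \<subseteq> {..n} \<times> {..lam 1}"
    using lam_le1 by (force simp: tab_pos_def)
qed auto

lemma ladder:
  assumes "(i,c) \<in> P" "(k,l) \<in> P" "i < k" "c < l" "mu k < c"
  shows "(i,l) \<in> P" "(k,c) \<in> P"
proof -
  have "lam k \<le> lam i" using lammono assms by (auto simp: inP)
  then show "(i,l) \<in> P" "(k,c) \<in> P" using assms by (auto simp: inP)
qed

definition noT :: "mon \<Rightarrow> bool" where
  "noT s \<longleftrightarrow> (\<forall>i j k l. i < k \<longrightarrow> j < l \<longrightarrow> (i,j) \<in> P \<longrightarrow> (k,l) \<in> P \<longrightarrow> mu k < j \<longrightarrow>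
      lk s (i,j) = 0 \<or> lk s (k,l) = 0)"

lemma rc_pos: "rc P s i > 0 \<longleftrightarrow> (\<exists>v\<in>P. fst v = i \<and> lk s v > 0)"
  unfolding rc_def sum_pos_nat[OF finP] by (auto split: if_splits)

lemma cc_pos: "cc P s i > 0 \<longleftrightarrow> (\<exists>v\<in>P. snd v = i \<and> lk s v > 0)"
  unfolding cc_def sum_pos_nat[OF finP] by (auto split: if_splits)

lemma le_rc: "v \<in> P \<Longrightarrow> lk s v \<le> rc P s (fst v)"
proof -
  assume v: "v \<in> P"
  have "(if fst v = fst v then lk s v else 0) \<le> (\<Sum>w\<in>P. if fst w = fst v then lk s w else 0)"
    by (rule member_le_sum) (use finP v in auto)
  then show ?thesis by (simp add: rc_def)
qed

lemma le_cc: "v \<in> P \<Longrightarrow> lk s v \<le> cc P s (snd v)"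
proof -
  assume v: "v \<in> P"
  have "(if snd v = snd v then lk s v else 0) \<le> (\<Sum>w\<in>P. if snd w = snd v then lk s w else 0)"
    by (rule member_le_sum) (use finP v in auto)
  then show ?thesis by (simp add: cc_def)
qed

lemma minT_form:
  assumes "g \<in> minors2 P tab_entry"
  shows "\<exists>i j k l. i < k \<and> j < l \<and> (i,j) \<in> P \<and> (i,l) \<in> P \<and> (k,j) \<in> P \<and> (k,l) \<in> P \<and>
     g = sng (xv (i,j) + xv (k,l)) 1 - sng (xv (i,l) + xv (k,j)) (1::'a::comm_ring_1)"
  using assms by (auto simp: minors2_def tab_entry_def Var_mult)

lemma minT_in:
  assumes "i < k" "j < l" "(i,j) \<in> P" "(k,l) \<in> P" "mu k < j"
  shows "sng (xv (i,j) + xv (k,l)) 1 - sng (xv (i,l) + xv (k,j)) (1::'a::comm_ring_1) \<in> minors2 P tab_entry"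
  using assms ladder[OF assms(3,4,1,2,5)] unfolding minors2_def tab_entry_def Var_mult by blast

lemma stdT_noT:
  assumes "std (minors2 P tab_entry :: 'a::comm_ring_1 mpoly set) s"
  shows "noT s"
  unfolding noT_def
proof (intro allI impI)
  fix i j k l assume h: "i < k" "j < l" "(i,j) \<in> P" "(k,l) \<in> P" "mu k < j"
  let ?g = "sng (xv (i,j) + xv (k,l)) 1 - sng (xv (i,l) + xv (k,j)) (1::'a)"
  have g: "?g \<in> minors2 P tab_entry" by (rule minT_in[OF h])
  have lt: "lex_less (xv (i,l) + xv (k,j)) (xv (i,j) + xv (k,l))" by (rule lexT[OF h(1,2)])
  have "?g \<noteq> 0" "lead_mon ?g = xv (i,j) + xv (k,l)" using lead_mon_binom[OF lt] by auto
  then have "\<not> mon_dvd (xv (i,j) + xv (k,l)) s" using assms g unfolding std_def by metis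
  moreover have "(i,j) \<noteq> (k,l)" using h by auto
  ultimately show "lk s (i,j) = 0 \<or> lk s (k,l) = 0" using xv2_dvd by blast
qed

end


context lad
begin

lemma keys_zero_outside: "ks s \<subseteq> P \<Longrightarrow> v \<notin> P \<Longrightarrow> lk s v = 0"
  by (auto simp: in_keys_iff)

lemma rc_pos2: "rc P s i > 0 \<Longrightarrow> \<exists>l. (i,l) \<in> P \<and> lk s (i,l) > 0"
proof -
  assume "rc P s i > 0"
  then obtain v where v: "v \<in> P" "fst v = i" "lk s v > 0" using rc_pos by blast
  then show ?thesis by (intro exI[of _ "snd v"]) (cases v, auto)
qed

lemma cc_pos2: "cc P s j > 0 \<Longrightarrow> \<exists>i. (i,j) \<in> P \<and> lk s (i,j) > 0"
proof -
  assume "cc P s j > 0"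
  then obtain v where v: "v \<in> P" "snd v = j" "lk s v > 0" using cc_pos by blast
  then show ?thesis by (intro exI[of _ "fst v"]) (cases v, auto)
qed

lemma noT_mono: assumes "noT s" "\<And>v. lk s' v \<le> lk s v" shows "noT s'"
  unfolding noT_def
proof (intro allI impI)
  fix i j k l assume h: "i < k" "j < l" "(i,j) \<in> P" "(k,l) \<in> P" "mu k < j"
  have "lk s (i,j) = 0 \<or> lk s (k,l) = 0" using assms(1)[unfolded noT_def, rule_format, OF h] .
  then show "lk s' (i,j) = 0 \<or> lk s' (k,l) = 0" using assms(2)[of "(i,j)"] assms(2)[of "(k,l)"] by auto
qed

lemma injT:
  "ks s \<subseteq> P \<Longrightarrow> ks t \<subseteq> P \<Longrightarrow> noT s \<Longrightarrow> noT t \<Longrightarrow> rc P s = rc P t \<Longrightarrow> cc P s = cc P t \<Longrightarrow> s = t"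
proof (induction "deg P s" arbitrary: s t rule: less_induct)
  case less
  show ?case
  proof (cases "\<exists>v\<in>P. lk s v > 0")
    case False
    then have s0: "lk s v = 0" for v
      using keys_zero_outside[OF less.prems(1)] by (cases "v \<in> P") auto
    have "rc P s i = 0" for i unfolding rc_def by (rule sum.neutral) (simp add: s0)
    then have t0: "lk t v = 0" for v
    proof -
      assume r: "\<And>i. rc P s i = 0"
      show ?thesis
      proof (cases "v \<in> P")
        case True
        then show ?thesis using le_rc[OF True, of t] r less.prems(5) by simp
      qed (use keys_zero_outside[OF less.prems(2)] in auto)
    qed
    show ?thesis by (rule poly_mapping_eqI) (simp add: s0 t0)
  next
    case True
    then obtain v0 where v0: "v0 \<in> P" "lk s v0 > 0" by blast
    define RS where "RS = {i \<in> fst ` P. rc P s i > 0}"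
    have "RS \<subseteq> fst ` P" unfolding RS_def by blast
    then have finRS: "finite RS" using finite_imageI[OF finP] finite_subset by blast
    have "rc P s (fst v0) > 0" using v0(2) le_rc[OF v0(1), of s] by linarith
    moreover have "fst v0 \<in> fst ` P" using v0(1) by blast
    ultimately have "fst v0 \<in> RS" unfolding RS_def by blast
    then have neRS: "RS \<noteq> {}" by blast
    define k where "k = Max RS"
    have kRS: "k \<in> RS" unfolding k_def using finRS neRS by (rule Max_in)
    have kmax: "i \<le> k" if ri: "rc P s i > 0" for i
    proof -
      obtain l where "(i,l) \<in> P" using rc_pos2[OF ri] by blast
      then have "i \<in> fst ` P" by (metis fst_conv imageI)
      then have "i \<in> RS" unfolding RS_def using ri by blast
      then show ?thesis unfolding k_def using finRS by (simp add: Max_ge)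
    qed
    obtain l where l: "(k,l) \<in> P" "lk s (k,l) > 0"
      using kRS rc_pos2[of s k] unfolding RS_def by blast
    define CS where "CS = {j \<in> snd ` P. mu k < j \<and> cc P s j > 0}"
    have "CS \<subseteq> snd ` P" unfolding CS_def by blast
    then have finCS: "finite CS" using finite_imageI[OF finP] finite_subset by blast
    have lCS: "l \<in> CS"
    proof -
      have "mu k < l" using l(1) by (simp add: inP)
      moreover have "l \<in> snd ` P" using l(1) by (metis imageI snd_conv)
      moreover have "cc P s l > 0" using l(2) le_cc[OF l(1), of s] by simp
      ultimately show ?thesis unfolding CS_def by blast
    qed
    define c where "c = Min CS"
    have cCS: "c \<in> CS" unfolding c_def using finCS lCS by (intro Min_in) auto
    have cmin: "c \<le> j" if "j \<in> CS" for j unfolding c_def using finCS that by (rule Min_le)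
    have peel: "lk u (k,c) > 0"
      if u: "ks u \<subseteq> P" "noT u" "rc P u = rc P s" "cc P u = cc P s" for u
    proof -
      have "rc P u k > 0" using kRS u(3) unfolding RS_def by simp
      then obtain l' where l': "(k,l') \<in> P" "lk u (k,l') > 0" using rc_pos2[of u k] by blast
      have "l' \<in> CS"
      proof -
        have "mu k < l'" using l'(1) by (simp add: inP)
        moreover have "l' \<in> snd ` P" using l'(1) by (metis imageI snd_conv)
        moreover have "cc P s l' > 0" using l'(2) le_cc[OF l'(1), of u] u(4) by simp
        ultimately show ?thesis unfolding CS_def by blast
      qed
      then have cl: "c \<le> l'" by (rule cmin)
      have "cc P u c > 0" using cCS u(4) unfolding CS_def by simp
      then obtain i where i: "(i,c) \<in> P" "lk u (i,c) > 0" using cc_pos2[of u c] by blast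
      have "lk u (i,c) \<le> rc P s i" using le_rc[OF i(1), of u] u(3) by simp
      then have "rc P s i > 0" using i(2) by linarith
      then have ik: "i \<le> k" by (rule kmax)
      have mkc: "mu k < c" using cCS unfolding CS_def by simp
      show ?thesis
      proof (cases "i = k")
        case True then show ?thesis using i by simp
      next
        case False
        then have ik': "i < k" using ik by simp
        have "c = l'"
        proof (rule ccontr)
          assume "c \<noteq> l'"
          then have cl': "c < l'" using cl by simp
          have "lk u (i,c) = 0 \<or> lk u (k,l') = 0"
            by (rule u(2)[unfolded noT_def, rule_format, OF ik' cl' i(1) l'(1) mkc])
          then show False using i(2) l'(2) by simp
        qed
        then show ?thesis using l' by simp
      qed
    qed
    have ps: "lk s (k,c) > 0" by (rule peel[OF less.prems(1) less.prems(3) refl refl])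
    have pt: "lk t (k,c) > 0"
      by (rule peel[OF less.prems(2) less.prems(4) less.prems(5)[symmetric] less.prems(6)[symmetric]])
    have kcP: "(k,c) \<in> P"
      using keys_zero_outside[OF less.prems(1), of "(k,c)"] ps by (cases "(k,c) \<in> P") auto
    define s' where "s' = s - xv (k,c)"
    define t' where "t' = t - xv (k,c)"
    have ss: "s = s' + xv (k,c)" unfolding s'_def by (rule mon_dvd_split[OF xv_dvd[OF ps]])
    have tt: "t = t' + xv (k,c)" unfolding t'_def by (rule mon_dvd_split[OF xv_dvd[OF pt]])
    have s'P: "ks s' \<subseteq> P" unfolding s'_def using keys_mon_minus less.prems(1) by blast
    have t'P: "ks t' \<subseteq> P" unfolding t'_def using keys_mon_minus less.prems(2) by blast
    have les: "lk s' v \<le> lk s v" for v unfolding s'_def by (simp add: lookup_minus)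
    have let': "lk t' v \<le> lk t v" for v unfolding t'_def by (simp add: lookup_minus)
    have ns': "noT s'" using less.prems(3) les by (rule noT_mono)
    have nt': "noT t'" using less.prems(4) let' by (rule noT_mono)
    have r': "rc P s' = rc P t'"
    proof
      fix i
      have "rc P s i = rc P s' i + rc P (xv (k,c)) i" by (subst ss) (rule rc_add)
      moreover have "rc P t i = rc P t' i + rc P (xv (k,c)) i" by (subst tt) (rule rc_add)
      ultimately show "rc P s' i = rc P t' i" using less.prems(5) by simp
    qed
    have c': "cc P s' = cc P t'"
    proof
      fix i
      have "cc P s i = cc P s' i + cc P (xv (k,c)) i" by (subst ss) (rule cc_add)
      moreover have "cc P t i = cc P t' i + cc P (xv (k,c)) i" by (subst tt) (rule cc_add)
      ultimately show "cc P s' i = cc P t' i" using less.prems(6) by simp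
    qed
    have "deg P s = deg P s' + deg P (xv (k,c))" by (subst ss) (rule deg_add)
    then have "deg P s = deg P s' + 1" using deg_xv[OF finP kcP] by simp
    then have "deg P s' < deg P s" by simp
    then have "s' = t'" using less.hyps s'P t'P ns' nt' r' c' by blast
    then show ?thesis using ss tt by simp
  qed
qed

end


lemma keys_xv2: "ks (xv v + xv w) \<subseteq> {v, w}"
  using keys_add[of "xv v" "xv w"] by auto

context lad
begin

lemma rc_xv2: "v \<in> P \<Longrightarrow> w \<in> P \<Longrightarrow> rc P (xv v + xv w) z = (if fst v = z then 1 else 0) + (if fst w = z then 1 else 0)"
  by (simp only: rc_add rc_xv[OF finP])
lemma cc_xv2: "v \<in> P \<Longrightarrow> w \<in> P \<Longrightarrow> cc P (xv v + xv w) z = (if snd v = z then 1 else 0) + (if snd w = z then 1 else 0)"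
  by (simp only: cc_add cc_xv[OF finP])

theorem thmT:
  "is_groebner_basis (minors2 P tab_entry :: 'a::field mpoly set) (ideal_in (poly_ring P) (minors2 P tab_entry))"
proof (rule generic_gb[where \<phi> = "\<lambda>m. (rc P m, cc P m)"])
  show "finite P" by (rule finP)
  show "\<forall>g\<in>minors2 P tab_entry. \<exists>a b. (g = sng a 1 - sng b (1::'a) \<or> g = sng b 1 - sng a 1) \<and> lex_less b a
                 \<and> (rc P a, cc P a) = (rc P b, cc P b) \<and> ks a \<subseteq> P \<and> ks b \<subseteq> P"
  proof
    fix g :: "'a mpoly" assume "g \<in> minors2 P tab_entry"
    then obtain i j k l where h: "i < k" "j < l" "(i,j) \<in> P" "(i,l) \<in> P" "(k,j) \<in> P" "(k,l) \<in> P"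
      "g = sng (xv (i,j) + xv (k,l)) 1 - sng (xv (i,l) + xv (k,j)) 1"
      using minT_form by blast
    have r: "rc P (xv (i,j) + xv (k,l)) = rc P (xv (i,l) + xv (k,j))"
      using h by (simp only: fun_eq_iff rc_xv2) auto
    have c: "cc P (xv (i,j) + xv (k,l)) = cc P (xv (i,l) + xv (k,j))"
      using h by (simp only: fun_eq_iff cc_xv2) auto
    have k1: "ks (xv (i,j) + xv (k,l)) \<subseteq> P" using keys_xv2[of "(i,j)" "(k,l)"] h by blast
    have k2: "ks (xv (i,l) + xv (k,j)) \<subseteq> P" using keys_xv2[of "(i,l)" "(k,j)"] h by blast
    show "\<exists>a b. (g = sng a 1 - sng b 1 \<or> g = sng b 1 - sng a 1) \<and> lex_less b a
                 \<and> (rc P a, cc P a) = (rc P b, cc P b) \<and> ks a \<subseteq> P \<and> ks b \<subseteq> P"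
      by (rule exI[of _ "xv (i,j) + xv (k,l)"], rule exI[of _ "xv (i,l) + xv (k,j)"])
         (intro conjI disjI1 h(7) lexT[OF h(1,2)] k1 k2, simp only: r c)
  qed
  show "(rc P (u + a), cc P (u + a)) = (rc P (u + b), cc P (u + b))"
    if "(rc P a, cc P a) = (rc P b, cc P b)" for u a b
  proof -
    have ra: "rc P a = rc P b" and ca: "cc P a = cc P b" using that by simp_all
    have "rc P (u + a) = rc P (u + b)" by (rule ext) (simp only: rc_add ra)
    moreover have "cc P (u + a) = cc P (u + b)" by (rule ext) (simp only: cc_add ca)
    ultimately show ?thesis by simp
  qed
  show "s = t" if "ks s \<subseteq> P" "ks t \<subseteq> P" "std (minors2 P tab_entry :: 'a mpoly set) s"
    "std (minors2 P tab_entry :: 'a mpoly set) t" "(rc P s, cc P s) = (rc P t, cc P t)" for s t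
  proof -
    have ra: "rc P s = rc P t" and ca: "cc P s = cc P t" using that(5) by simp_all
    show ?thesis by (rule injT[OF that(1,2) stdT_noT[OF that(3)] stdT_noT[OF that(4)] ra ca])
  qed
qed

end


lemma sum_zero_tail:
  "a \<le> (b::nat) \<Longrightarrow> (\<forall>y. a \<le> y \<and> y < b \<longrightarrow> f y = (0::nat)) \<Longrightarrow> sum f {..<b} = sum f {..<a}"
proof (induction b)
  case 0 then show ?case by simp
next
  case (Suc b)
  show ?case
  proof (cases "a = Suc b")
    case False
    then have ab: "a \<le> b" using Suc.prems(1) by simp
    have "f b = 0" using Suc.prems(2) ab by simp
    then show ?thesis using Suc.IH[OF ab] Suc.prems(2) by simp
  qed simp
qed

lemma rec_lemma:
  fixes R C :: "nat \<Rightarrow> nat"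
  assumes zero: "\<And>y. N \<le> y \<Longrightarrow> R y = 0"
    and sep: "\<And>y z. R y > 0 \<Longrightarrow> C z > 0 \<Longrightarrow> y \<le> z"
  shows "R x = min (R x + C x) ((\<Sum>y<N. R y) - (\<Sum>y<x. R y + C y))"
proof (cases "\<exists>y. R y > 0")
  case False
  then have "R y = 0" for y by simp
  then show ?thesis by simp
next
  case True
  define T where "T = {y. R y > 0}"
  have "T \<subseteq> {..<N}"
  proof
    fix y assume "y \<in> T"
    then have "R y > 0" unfolding T_def by simp
    then have "\<not> N \<le> y" using zero[of y] by auto
    then show "y \<in> {..<N}" by simp
  qed
  then have finT: "finite T" using finite_subset by blast
  have neT: "T \<noteq> {}" using True unfolding T_def by blast
  define t where "t = Max T"
  have tT: "t \<in> T" unfolding t_def using finT neT by (rule Max_in)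
  then have Rt: "R t > 0" unfolding T_def by simp
  have tN: "t < N" using tT \<open>T \<subseteq> {..<N}\<close> by blast
  have Rz: "R y = 0" if "t < y" for y
  proof (rule ccontr)
    assume "R y \<noteq> 0"
    then have "y \<in> T" unfolding T_def by simp
    then have "y \<le> t" unfolding t_def using finT by (simp add: Max_ge)
    then show False using that by simp
  qed
  have Cz: "C y = 0" if "y < t" for y
  proof (rule ccontr)
    assume "C y \<noteq> 0"
    then have "t \<le> y" using sep[OF Rt] by simp
    then show False using that by simp
  qed
  have D: "(\<Sum>y<N. R y) = (\<Sum>y<Suc t. R y)"
    by (rule sum_zero_tail) (use tN Rz in auto)
  show ?thesis
  proof (cases "x < t")
    case True
    have s1: "(\<Sum>y<x. R y + C y) = (\<Sum>y<x. R y)" by (rule sum.cong) (use True Cz in auto)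
    have le: "(\<Sum>y<Suc x. R y) \<le> (\<Sum>y<N. R y)"
      by (rule sum_mono2) (use True tN in auto)
    have "(\<Sum>y<Suc x. R y) = (\<Sum>y<x. R y) + R x" by (rule sum.lessThan_Suc)
    then have "R x \<le> (\<Sum>y<N. R y) - (\<Sum>y<x. R y + C y)" using le s1 by linarith
    moreover have "R x + C x = R x" using Cz[OF True] by linarith
    ultimately show ?thesis unfolding min_def by auto
  next
    case False
    show ?thesis
    proof (cases "x = t")
      case True
      have s1: "(\<Sum>y<x. R y + C y) = (\<Sum>y<x. R y)" by (rule sum.cong) (use True Cz in auto)
      have "(\<Sum>y<Suc t. R y) = (\<Sum>y<t. R y) + R t" by (rule sum.lessThan_Suc)
      then have "(\<Sum>y<N. R y) - (\<Sum>y<x. R y + C y) = R x" using D s1 unfolding True by linarith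
      then show ?thesis unfolding min_def by auto
    next
      case False
      then have xt: "t < x" using \<open>\<not> x < t\<close> by linarith
      have "(\<Sum>y<Suc t. R y) \<le> (\<Sum>y<x. R y)"
        by (rule sum_mono2) (use xt in auto)
      also have "\<dots> \<le> (\<Sum>y<x. R y + C y)" by (rule sum_mono) simp
      finally have "(\<Sum>y<N. R y) - (\<Sum>y<x. R y + C y) = 0" using D by linarith
      then show ?thesis using Rz[OF xt] unfolding min_def by auto
    qed
  qed
qed



context lad
begin

abbreviation SP where "SP \<equiv> sym_pos n lam mu"

definition ent :: "nat \<times> nat \<Rightarrow> nat \<times> nat" where
  "ent p = (if p \<in> P then p else (snd p, fst p))"

lemma inSP: "(i,j) \<in> SP \<longleftrightarrow> (i,j) \<in> P \<or> (j,i) \<in> P"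
  by (simp add: sym_pos_def)

lemma sym_entry_ent: "sym_entry n lam mu p = Var (ent p)"
  by (simp add: sym_entry_def ent_def)

lemma diagP: "(x,y) \<in> P \<Longrightarrow> x \<le> y"
  using mui by (fastforce simp: inP)

lemma ent_P: "p \<in> SP \<Longrightarrow> ent p \<in> P"
  by (cases p) (auto simp: ent_def inSP)

lemma ent_id: "p \<in> P \<Longrightarrow> ent p = p"
  by (simp add: ent_def)

lemma ent_swap: "(x,y) \<in> P \<Longrightarrow> ent (y,x) = (x,y)"
proof -
  assume h: "(x,y) \<in> P"
  show ?thesis
  proof (cases "(y,x) \<in> P")
    case True
    then have "x = y" using diagP[OF h] diagP[OF True] by simp
    then show ?thesis by (simp add: ent_def)
  qed (simp add: ent_def)
qed

lemma ent_cases: "ent (a,b) = (a,b) \<or> ent (a,b) = (b,a)"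
  by (simp add: ent_def)

lemma ent_eq: "ent (a,b) = ent (c,d) \<Longrightarrow> (a = c \<and> b = d) \<or> (a = d \<and> b = c)"
  using ent_cases[of a b] ent_cases[of c d] by auto

lemma lam_ge_n: "1 \<le> i \<Longrightarrow> i \<le> n \<Longrightarrow> n \<le> lam i"
proof -
  assume "1 \<le> i" "i \<le> n"
  then have "lam n \<le> lam i" using lammono by auto
  moreover have "n - 1 \<le> mu n" using mui n1 by auto
  ultimately show ?thesis using mun by linarith
qed

lemma N_bound: "v \<in> P \<Longrightarrow> fst v < lam 1 + 1 \<and> snd v < lam 1 + 1"
proof -
  assume "v \<in> P"
  then obtain a b where v: "v = (a,b)" "1 \<le> a" "a \<le> n" "mu a < b" "b \<le> lam a" by (cases v) (auto simp: inP)
  have "lam a \<le> lam 1" by (rule lam_le1[OF v(2,3)])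
  moreover have "n \<le> lam 1" using lam_ge_n[of 1] n1 by simp
  ultimately show ?thesis using v by simp
qed

lemma minS_form:
  assumes "g \<in> minors2 SP (sym_entry n lam mu)"
  shows "\<exists>i j k l. i < k \<and> j < l \<and> (i,j) \<in> SP \<and> (i,l) \<in> SP \<and> (k,j) \<in> SP \<and> (k,l) \<in> SP \<and>
     g = sng (xv (ent (i,j)) + xv (ent (k,l))) 1 - sng (xv (ent (i,l)) + xv (ent (k,j))) (1::'a::comm_ring_1)"
  using assms by (auto simp: minors2_def sym_entry_ent Var_mult)

lemma minT_sub_minS: "minors2 P tab_entry \<subseteq> (minors2 SP (sym_entry n lam mu) :: 'a::comm_ring_1 mpoly set)"
proof
  fix g :: "'a mpoly" assume "g \<in> minors2 P tab_entry"
  then obtain i j k l where h: "i < k" "j < l" "(i,j) \<in> P" "(i,l) \<in> P" "(k,j) \<in> P" "(k,l) \<in> P"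
      "g = tab_entry (i,j) * tab_entry (k,l) - tab_entry (i,l) * tab_entry (k,j)"
    unfolding minors2_def by blast
  have e: "sym_entry n lam mu p = tab_entry p" if "p \<in> P" for p
    using that by (simp add: sym_entry_def tab_entry_def)
  have "g = sym_entry n lam mu (i,j) * sym_entry n lam mu (k,l) - sym_entry n lam mu (i,l) * sym_entry n lam mu (k,j)"
    using h by (simp add: e)
  moreover have "(i,j) \<in> SP" "(i,l) \<in> SP" "(k,j) \<in> SP" "(k,l) \<in> SP" using h by (simp_all add: inSP)
  ultimately show "g \<in> minors2 SP (sym_entry n lam mu)" unfolding minors2_def using h(1,2) by blast
qed

lemma std_anti: "G \<subseteq> G' \<Longrightarrow> std G' s \<Longrightarrow> std G s"
  unfolding std_def by blast

lemma stdS_noT: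
  assumes "std (minors2 SP (sym_entry n lam mu) :: 'a::comm_ring_1 mpoly set) s"
  shows "noT s"
  by (rule stdT_noT[where 'a='a], rule std_anti[OF minT_sub_minS assms])

end


context lad
begin

lemma sepS:
  assumes st: "std (minors2 SP (sym_entry n lam mu) :: 'a::comm_ring_1 mpoly set) s"
    and h: "(a,b) \<in> P" "(a',b') \<in> P" "lk s (a,b) > 0" "lk s (a',b') > 0"
  shows "a' \<le> b"
proof (rule ccontr)
  assume "\<not> a' \<le> b"
  then have ba: "b < a'" by simp
  have ab: "a \<le> b" by (rule diagP[OF h(1)])
  have ab': "a' \<le> b'" by (rule diagP[OF h(2)])
  have aP: "1 \<le> a" "a \<le> n" "mu a < b" "b \<le> lam a" using h(1) by (simp_all add: inP)
  have a'P: "1 \<le> a'" "a' \<le> n" "mu a' < b'" "b' \<le> lam a'" using h(2) by (simp_all add: inP)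
  have p1: "(a,a') \<in> P"
  proof -
    have "n \<le> lam a" by (rule lam_ge_n[OF aP(1,2)])
    then show ?thesis using aP a'P ba by (simp add: inP)
  qed
  have p2: "(b,b') \<in> P"
  proof -
    have "mu b \<le> mu a'" using mumono aP(1) ab ba a'P(2) by simp
    moreover have "lam a' \<le> lam b" using lammono aP(1) ab ba a'P(2) by simp
    ultimately show ?thesis using aP a'P ab ba by (simp add: inP)
  qed
  let ?E = "sym_entry n lam mu :: nat \<times> nat \<Rightarrow> 'a mpoly"
  let ?g = "sng (xv (a,b) + xv (a',b')) 1 - sng (xv (a,a') + xv (b,b')) (1::'a)"
  have "?g = ?E (a,b) * ?E (b',a') - ?E (a,a') * ?E (b',b)"
    by (simp add: sym_entry_ent ent_id[OF h(1)] ent_swap[OF h(2)] ent_id[OF p1] ent_swap[OF p2] Var_mult)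
  note eqg = this
  have lt1: "a < b'" using ab ba ab' by simp
  have m: "(a,b) \<in> SP" "(a,a') \<in> SP" "(b',b) \<in> SP" "(b',a') \<in> SP"
    using h p1 p2 by (simp_all add: inSP)
  have gm: "?g \<in> minors2 SP ?E" unfolding minors2_def
    by (rule CollectI, rule exI[of _ a], rule exI[of _ b], rule exI[of _ b'], rule exI[of _ a'],
        intro conjI; fact)
  have lt: "lex_less (xv (a,a') + xv (b,b')) (xv (a,b) + xv (a',b'))"
    unfolding lex_less_def
  proof (intro exI[of _ "(a,b)"] conjI allI impI)
    have "(a,a') \<noteq> (a,b)" "(b,b') \<noteq> (a,b)" using ba ab' by auto
    then show "lk (xv (a,a') + xv (b,b')) (a,b) < lk (xv (a,b) + xv (a',b')) (a,b)"
      by (simp add: lookup_add lookup_single when_def)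
  next
    fix w assume "var_gt w (a,b)"
    then have "w \<noteq> (a,b)" "w \<noteq> (a',b')" "w \<noteq> (a,a')" "w \<noteq> (b,b')"
      using ab ba ab' by (auto simp: var_gt_def)
    then show "lk (xv (a,a') + xv (b,b')) w = lk (xv (a,b) + xv (a',b')) w"
      by (simp add: lookup_add lookup_single when_def)
  qed
  have g0: "?g \<noteq> 0" and lg: "lead_mon ?g = xv (a,b) + xv (a',b')" using lead_mon_binom[OF lt] by auto
  have "\<forall>g\<in>minors2 SP ?E. g \<noteq> 0 \<longrightarrow> \<not> mon_dvd (lead_mon g) s" using st by (simp only: std_def)
  then have "\<not> mon_dvd (lead_mon ?g) s" using gm g0 by blast
  then have nd: "\<not> mon_dvd (xv (a,b) + xv (a',b')) s" unfolding lg .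
  have "(a,b) \<noteq> (a',b')" using ab ba by auto
  then show False using xv2_dvd[OF _ h(3,4)] nd by blast
qed

abbreviation NN where "NN \<equiv> lam 1 + 1"

lemma sum_rc: "(\<Sum>y<NN. rc P s y) = deg P s"
proof -
  have "(\<Sum>y<NN. rc P s y) = (\<Sum>v\<in>P. \<Sum>y<NN. if fst v = y then lk s v else 0)"
    unfolding rc_def by (rule sum.swap)
  also have "\<dots> = (\<Sum>v\<in>P. lk s v)"
  proof (rule sum.cong)
    fix v assume "v \<in> P"
    then have "fst v \<in> {..<NN}" using N_bound by simp
    then show "(\<Sum>y<NN. if fst v = y then lk s v else 0) = lk s v" by simp
  qed simp
  finally show ?thesis by (simp add: deg_def)
qed

lemma sum_cc: "(\<Sum>y<NN. cc P s y) = deg P s"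
proof -
  have "(\<Sum>y<NN. cc P s y) = (\<Sum>v\<in>P. \<Sum>y<NN. if snd v = y then lk s v else 0)"
    unfolding cc_def by (rule sum.swap)
  also have "\<dots> = (\<Sum>v\<in>P. lk s v)"
  proof (rule sum.cong)
    fix v assume "v \<in> P"
    then have "snd v \<in> {..<NN}" using N_bound by simp
    then show "(\<Sum>y<NN. if snd v = y then lk s v else 0) = lk s v" by simp
  qed simp
  finally show ?thesis by (simp add: deg_def)
qed

lemma rc_zero: "NN \<le> y \<Longrightarrow> rc P s y = 0"
  unfolding rc_def by (rule sum.neutral) (use N_bound in fastforce)

lemma injS:
  assumes sP: "ks s \<subseteq> P" and tP: "ks t \<subseteq> P"
    and ss: "std (minors2 SP (sym_entry n lam mu) :: 'a::comm_ring_1 mpoly set) s"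
    and st: "std (minors2 SP (sym_entry n lam mu) :: 'a::comm_ring_1 mpoly set) t"
    and F: "(\<lambda>z. rc P s z + cc P s z) = (\<lambda>z. rc P t z + cc P t z)"
  shows "s = t"
proof -
  have sep: "y \<le> z" if r1: "rc P u y > 0" and c1: "cc P u z > 0"
      and su: "std (minors2 SP (sym_entry n lam mu) :: 'a mpoly set) u" for u y z
  proof -
    obtain l where l: "(y,l) \<in> P" "lk u (y,l) > 0" using rc_pos2[OF r1] by blast
    obtain i where i: "(i,z) \<in> P" "lk u (i,z) > 0" using cc_pos2[OF c1] by blast
    show ?thesis by (rule sepS[OF su i(1) l(1) i(2) l(2)])
  qed
  have Fz: "rc P s z + cc P s z = rc P t z + cc P t z" for z using F by meson
  have "(\<Sum>y<NN. rc P s y + cc P s y) = (\<Sum>y<NN. rc P t y + cc P t y)" using Fz by simp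
  then have "deg P s + deg P s = deg P t + deg P t" by (simp only: sum.distrib sum_rc sum_cc)
  then have D: "(\<Sum>y<NN. rc P s y) = (\<Sum>y<NN. rc P t y)" unfolding sum_rc by linarith
  have rs: "rc P s x = min (rc P s x + cc P s x) ((\<Sum>y<NN. rc P s y) - (\<Sum>y<x. rc P s y + cc P s y))" for x
    by (rule rec_lemma) (use rc_zero sep[OF _ _ ss] in auto)
  have rt: "rc P t x = min (rc P t x + cc P t x) ((\<Sum>y<NN. rc P t y) - (\<Sum>y<x. rc P t y + cc P t y))" for x
    by (rule rec_lemma) (use rc_zero sep[OF _ _ st] in auto)
  have R: "rc P s = rc P t"
  proof
    fix x show "rc P s x = rc P t x" using rs[of x] rt[of x] D Fz by simp
  qed
  have C: "cc P s = cc P t"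
  proof
    fix x show "cc P s x = cc P t x" using Fz[of x] R by simp
  qed
  show ?thesis by (rule injT[OF sP tP stdS_noT[OF ss] stdS_noT[OF st] R C])
qed

end


context lad
begin

lemma phiS_xv: "(a,b) \<in> SP \<Longrightarrow> rc P (xv (ent (a,b))) z + cc P (xv (ent (a,b))) z = (if a = z then 1 else 0) + (if b = z then 1 else 0)"
proof -
  assume p: "(a,b) \<in> SP"
  have e: "ent (a,b) \<in> P" by (rule ent_P[OF p])
  have eq: "rc P (xv (ent (a,b))) z + cc P (xv (ent (a,b))) z = (if fst (ent (a,b)) = z then 1 else 0) + (if snd (ent (a,b)) = z then 1 else 0)"
    by (simp only: rc_xv[OF finP e] cc_xv[OF finP e])
  from ent_cases[of a b] show ?thesis
  proof
    assume "ent (a,b) = (a,b)"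
    then show ?thesis using eq by simp
  next
    assume "ent (a,b) = (b,a)"
    then show ?thesis using eq by simp
  qed
qed

theorem thmS:
  "is_groebner_basis (minors2 SP (sym_entry n lam mu) :: 'a::field mpoly set)
     (ideal_in (poly_ring P) (minors2 SP (sym_entry n lam mu)))"
proof (rule generic_gb[where \<phi> = "\<lambda>m z. rc P m z + cc P m z"])
  show "finite P" by (rule finP)
  show "\<forall>g\<in>minors2 SP (sym_entry n lam mu). \<exists>a b. (g = sng a 1 - sng b (1::'a) \<or> g = sng b 1 - sng a 1) \<and> lex_less b a
                 \<and> (\<lambda>z. rc P a z + cc P a z) = (\<lambda>z. rc P b z + cc P b z) \<and> ks a \<subseteq> P \<and> ks b \<subseteq> P"
  proof
    fix g :: "'a mpoly" assume "g \<in> minors2 SP (sym_entry n lam mu)"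
    then obtain i j k l where h: "i < k" "j < l" "(i,j) \<in> SP" "(i,l) \<in> SP" "(k,j) \<in> SP" "(k,l) \<in> SP"
      "g = sng (xv (ent (i,j)) + xv (ent (k,l))) 1 - sng (xv (ent (i,l)) + xv (ent (k,j))) 1"
      using minS_form by blast
    define A where "A = xv (ent (i,j)) + xv (ent (k,l))"
    define B where "B = xv (ent (i,l)) + xv (ent (k,j))"
    have gAB: "g = sng A 1 - sng B 1" using h(7) by (simp add: A_def B_def)
    have n1: "ent (i,j) \<noteq> ent (i,l)" using ent_eq[of i j i l] h(2) by auto
    have n2: "ent (i,j) \<noteq> ent (k,j)" using ent_eq[of i j k j] h(1) by auto
    have "lk B (ent (i,j)) = 0" using n1 n2 by (simp add: B_def lookup_add lookup_single when_def)
    moreover have "lk A (ent (i,j)) \<noteq> 0" by (simp add: A_def lookup_add lookup_single when_def)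
    ultimately have AB: "A \<noteq> B" by auto
    have ph: "(\<lambda>z. rc P A z + cc P A z) = (\<lambda>z. rc P B z + cc P B z)"
    proof
      fix z
      have "rc P A z + cc P A z = (rc P (xv (ent (i,j))) z + cc P (xv (ent (i,j))) z) + (rc P (xv (ent (k,l))) z + cc P (xv (ent (k,l))) z)"
        by (simp only: A_def rc_add cc_add)
      also have "\<dots> = (if i = z then 1 else 0) + (if j = z then 1 else 0) + ((if k = z then 1 else 0) + (if l = z then 1 else 0))"
        by (simp only: phiS_xv[OF h(3)] phiS_xv[OF h(6)] fst_conv snd_conv)
      finally have 1: "rc P A z + cc P A z = (if i = z then 1 else 0) + (if j = z then 1 else 0) + ((if k = z then 1 else 0) + (if l = z then 1 else 0))" .
      have "rc P B z + cc P B z = (rc P (xv (ent (i,l))) z + cc P (xv (ent (i,l))) z) + (rc P (xv (ent (k,j))) z + cc P (xv (ent (k,j))) z)"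
        by (simp only: B_def rc_add cc_add)
      also have "\<dots> = (if i = z then 1 else 0) + (if l = z then 1 else 0) + ((if k = z then 1 else 0) + (if j = z then 1 else 0))"
        by (simp only: phiS_xv[OF h(4)] phiS_xv[OF h(5)] fst_conv snd_conv)
      finally have 2: "rc P B z + cc P B z = (if i = z then 1 else 0) + (if l = z then 1 else 0) + ((if k = z then 1 else 0) + (if j = z then 1 else 0))" .
      show "rc P A z + cc P A z = rc P B z + cc P B z" unfolding 1 2 by simp
    qed
    have kA: "ks A \<subseteq> P" using keys_xv2[of "ent (i,j)" "ent (k,l)"] ent_P[OF h(3)] ent_P[OF h(6)] unfolding A_def by blast
    have kB: "ks B \<subseteq> P" using keys_xv2[of "ent (i,l)" "ent (k,j)"] ent_P[OF h(4)] ent_P[OF h(5)] unfolding B_def by blast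
    show "\<exists>a b. (g = sng a 1 - sng b 1 \<or> g = sng b 1 - sng a 1) \<and> lex_less b a
                 \<and> (\<lambda>z. rc P a z + cc P a z) = (\<lambda>z. rc P b z + cc P b z) \<and> ks a \<subseteq> P \<and> ks b \<subseteq> P"
    proof (cases "lex_less B A")
      case True
      show ?thesis
        by (rule exI[of _ A], rule exI[of _ B]) (intro conjI disjI1 gAB True ph kA kB)
    next
      case False
      then have lt: "lex_less A B" using lex_less_total[OF AB] by blast
      show ?thesis
        by (rule exI[of _ B], rule exI[of _ A]) (intro conjI disjI2 gAB lt ph[symmetric] kA kB)
    qed
  qed
  show "(\<lambda>z. rc P (u + a) z + cc P (u + a) z) = (\<lambda>z. rc P (u + b) z + cc P (u + b) z)"
    if "(\<lambda>z. rc P a z + cc P a z) = (\<lambda>z. rc P b z + cc P b z)" for u a b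
  proof
    fix z
    have "rc P a z + cc P a z = rc P b z + cc P b z" using that by meson
    then show "rc P (u + a) z + cc P (u + a) z = rc P (u + b) z + cc P (u + b) z"
      by (simp only: rc_add cc_add)
  qed
  show "s = t" if "ks s \<subseteq> P" "ks t \<subseteq> P" "std (minors2 SP (sym_entry n lam mu) :: 'a mpoly set) s"
    "std (minors2 SP (sym_entry n lam mu) :: 'a mpoly set) t"
    "(\<lambda>z. rc P s z + cc P s z) = (\<lambda>z. rc P t z + cc P t z)" for s t
    by (rule injS[OF that])
qed

end

theorem theorem2p4:
  fixes n :: nat and lam mu :: "nat \<Rightarrow> nat"
  assumes "n \<ge> 1"
    and "\<forall>i. 1 \<le> i \<and> i \<le> n \<longrightarrow> lam i > 0"
    and "\<forall>i j. 1 \<le> i \<and> i \<le> j \<and> j \<le> n \<longrightarrow> lam j \<le> lam i"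
    and "\<forall>i j. 1 \<le> i \<and> i \<le> j \<and> j \<le> n \<longrightarrow> mu i \<le> mu j"
    and "mu n < lam n"
    and "\<forall>i. 1 \<le> i \<and> i \<le> n \<longrightarrow> i - 1 \<le> mu i"
  shows "is_groebner_basis (minors2 (tab_pos n lam mu) tab_entry :: 'a::field mpoly set)
            (ideal_in (poly_ring (tab_pos n lam mu)) (minors2 (tab_pos n lam mu) tab_entry))
       \<and> is_groebner_basis (minors2 (sym_pos n lam mu) (sym_entry n lam mu) :: 'a::field mpoly set)
            (ideal_in (poly_ring (tab_pos n lam mu)) (minors2 (sym_pos n lam mu) (sym_entry n lam mu)))"
proof -
  interpret lad n lam mu using assms by (unfold_locales) auto
  show ?thesis using thmT thmS by blast
qed



end
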